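(* Let $n\ge1$, $m\ge0$ an integer, $m^n=(m,\dots,m)$ ($n$ parts) and $x=(x_1,\dots,x_n)\in\mathbb{C}^n$. Then $$W_{m^n}(x;q,p,t,a,b)=\prod_{j=1}^{\lfloor n/2\rfloor}\frac{(qbt^{n-2j})_{2m}}{(qbt^{-1-n+2j})_{2m}}\prod_{i=1}^n\frac{(x_i^{-1})_{m}(ax_i)_{m}}{(qbx_i)_{m}(qb/(ax_i))_{m}}.$$
   Context: Fix $|p|<1$; parameters generic. $E(x)=(x;p)_\infty(p/x;p)_\infty$. For integer $m\ge0$, $(a)_m=\prod_{k=0}^{m-1}E(aq^k)$, for $m<0$, $(a)_m=1/(aq^m)_{-m}$; for a partition $\lambda$ with $n$ parts $(a)_\lambda=\prod_{i=1}^n(at^{1-i})_{\lambda_i}$; several arguments denote products; integer subscripts denote the single-integer symbol. For $n$-part partitions with $\lambda_1\ge\mu_1\ge\dots\ge\lambda_n\ge\mu_n$, $\lambda_{n+1}=\mu_{n+1}=0$, $H_{\lambda/\mu}(q,p,t,b)=\prod_{1\le i<j\le n}\Big\{\frac{(q^{\mu_i-\mu_{j-1}}t^{j-i})_{\mu_{j-1}-\lambda_j}(q^{\lambda_i+\lambda_j}t^{3-j-i}b)_{\mu_{j-1}-\lambda_j}}{(q^{\mu_i-\mu_{j-1}+1}t^{j-i-1})_{\mu_{j-1}-\lambda_j}(q^{\lambda_i+\lambda_j+1}t^{2-j-i}b)_{\mu_{j-1}-\lambda_j}}\frac{(q^{\lambda_i-\mu_{j-1}+1}t^{j-i-1})_{\mu_{j-1}-\lambda_j}}{(q^{\lambda_i-\mu_{j-1}}t^{j-i})_{\mu_{j-1}-\lambda_j}}\Big\}\prod_{1\le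 i<j-1\le n}\frac{(q^{\mu_i+\lambda_j+1}t^{1-j-i}b)_{\mu_{j-1}-\lambda_j}}{(q^{\mu_i+\lambda_j}t^{2-j-i}b)_{\mu_{j-1}-\lambda_j}}$; for $x\in\mathbb{C}$, $W_{\lambda/\mu}(x;q,p,t,a,b)=H_{\lambda/\mu}\frac{(x^{-1},ax)_\lambda(qbx/t,qb/(axt))_\mu}{(x^{-1},ax)_\mu(qbx,qb/(ax))_\lambda}\prod_{i=1}^n\frac{E(bt^{1-2i}q^{2\mu_i})}{E(bt^{1-2i})}\frac{(bt^{1-2i})_{\mu_i+\lambda_{i+1}}}{(bqt^{-2i})_{\mu_i+\lambda_{i+1}}}t^{i(\mu_i-\lambda_{i+1})}$ (zero if the interlacing fails); recursively $W_{\lambda/\mu}(y,z_1,\dots,z_\ell;q,p,t,a,b)=\sum_\nu W_{\lambda/\nu}(yt^{-\ell};q,p,t,at^{2\ell},bt^\ell)W_{\nu/\mu}(z_1,\dots,z_\ell;q,p,t,a,b)$ over $\nu$ with $\lambda_1\ge\nu_1\ge\dots\ge\lambda_n\ge\nu_n\ge0$; $W_\lambda=W_{\lambda/0}$. *)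

theory Defs
  imports "HOL-Analysis.Infinite_Products"
begin

definition qinf :: "complex \<Rightarrow> complex \<Rightarrow> complex" where
  "qinf p x = (\<Prod>k. 1 - x * p ^ k)"

definition Eth :: "complex \<Rightarrow> complex \<Rightarrow> complex" where
  "Eth p x = qinf p x * qinf p (p / x)"

definition epoch :: "complex \<Rightarrow> complex \<Rightarrow> complex \<Rightarrow> int \<Rightarrow> complex" where
  "epoch p q a m = (if 0 \<le> m then (\<Prod>k<nat m. Eth p (a * q ^ k))
     else 1 / (\<Prod>k<nat (-m). Eth p (a * q powi (m + int k))))"

text \<open>Partitions with n parts are lists of length n; part lam i is the i-th part
  (1-based), and 0 outside 1..n (so lambda_{n+1} = 0).\<close>
definition part :: "nat list \<Rightarrow> nat \<Rightarrow> int" where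
  "part lam i = (if 1 \<le> i \<and> i \<le> length lam then int (lam ! (i - 1)) else 0)"

definition ppoch :: "complex \<Rightarrow> complex \<Rightarrow> complex \<Rightarrow> complex \<Rightarrow> nat list \<Rightarrow> complex" where
  "ppoch p q t a lam = (\<Prod>i\<in>{1..length lam}. epoch p q (a * t powi (1 - int i)) (part lam i))"

definition interlace :: "nat list \<Rightarrow> nat list \<Rightarrow> bool" where
  "interlace lam mu \<longleftrightarrow> length mu = length lam \<and>
     (\<forall>i\<in>{1..length lam}. part mu i \<le> part lam i \<and> part lam (i + 1) \<le> part mu i)"

definition Hfun :: "complex \<Rightarrow> complex \<Rightarrow> complex \<Rightarrow> complex \<Rightarrow> nat list \<Rightarrow> nat list \<Rightarrow> complex" where
  "Hfun p q t b lam mu =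
    (\<Prod>i\<in>{1..length lam}. \<Prod>j\<in>{i<..length lam}.
       (let d = part mu (j - 1) - part lam j in
        epoch p q (q powi (part mu i - part mu (j - 1)) * t powi (int j - int i)) d
        * epoch p q (q powi (part lam i + part lam j) * t powi (3 - int j - int i) * b) d
        / (epoch p q (q powi (part mu i - part mu (j - 1) + 1) * t powi (int j - int i - 1)) d
           * epoch p q (q powi (part lam i + part lam j + 1) * t powi (2 - int j - int i) * b) d)
        * (epoch p q (q powi (part lam i - part mu (j - 1) + 1) * t powi (int j - int i - 1)) d
           / epoch p q (q powi (part lam i - part mu (j - 1)) * t powi (int j - int i)) d)))
    * (\<Prod>i\<in>{1..length lam}. \<Prod>j\<in>{i + 2..length lam + 1}.
       (let d = part mu (j - 1) - part lam j in
        epoch p q (q powi (part mu i + part lam j + 1) * t powi (1 - int j - int i) * b) d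
        / epoch p q (q powi (part mu i + part lam j) * t powi (2 - int j - int i) * b) d))"

definition W1 :: "complex \<Rightarrow> complex \<Rightarrow> complex \<Rightarrow> complex \<Rightarrow> complex \<Rightarrow> complex
    \<Rightarrow> nat list \<Rightarrow> nat list \<Rightarrow> complex" where
  "W1 p q t a b x lam mu =
    (if interlace lam mu then
       Hfun p q t b lam mu
       * (ppoch p q t (1 / x) lam * ppoch p q t (a * x) lam
          * ppoch p q t (q * b * x / t) mu * ppoch p q t (q * b / (a * x * t)) mu)
       / (ppoch p q t (1 / x) mu * ppoch p q t (a * x) mu
          * ppoch p q t (q * b * x) lam * ppoch p q t (q * b / (a * x)) lam)
       * (\<Prod>i\<in>{1..length lam}.
            Eth p (b * t powi (1 - 2 * int i) * q powi (2 * part mu i)) / Eth p (b * t powi (1 - 2 * int i))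
            * epoch p q (b * t powi (1 - 2 * int i)) (part mu i + part lam (i + 1))
            / epoch p q (b * q * t powi (- 2 * int i)) (part mu i + part lam (i + 1))
            * t powi (int i * (part mu i - part lam (i + 1))))
     else 0)"

text \<open>Multivariable W via the branching recursion; the first list entry is y.
  The empty-variable case (delta) is never used by the theorem.\<close>
fun Wm :: "complex \<Rightarrow> complex \<Rightarrow> complex \<Rightarrow> complex \<Rightarrow> complex \<Rightarrow> complex list
    \<Rightarrow> nat list \<Rightarrow> nat list \<Rightarrow> complex" where
  "Wm p q t a b [] lam mu = (if lam = mu then 1 else 0)"
| "Wm p q t a b [y] lam mu = W1 p q t a b y lam mu"
| "Wm p q t a b (y # z # zs) lam mu =
     (\<Sum>\<nu> | length \<nu> = length lam \<and> interlace lam \<nu>.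
        W1 p q t (a * t ^ (2 * (length zs + 1))) (b * t ^ (length zs + 1))
           (y * t powi (- int (length zs + 1))) lam \<nu>
        * Wm p q t a b (z # zs) \<nu> mu)"

definition generic_params :: "complex \<Rightarrow> complex list \<Rightarrow> bool" where
  "generic_params p zs \<longleftrightarrow>
    (\<forall>(k::int list) (u::int). length k = length zs \<and> (\<exists>i<length k. k ! i \<noteq> 0) \<longrightarrow>
       (\<Prod>i<length zs. (zs ! i) powi (k ! i)) \<noteq> p powi u)"

end

theory Submission
  imports Defs
begin


lemma qinf_nz:
  assumes "norm p < 1" "\<And>k. 1 - x * p ^ k \<noteq> 0"
  shows "qinf p x \<noteq> 0"
proof -
  have s: "summable (\<lambda>i. norm ((1 - x * p ^ i) - 1))"
    using assms(1) by (simp add: norm_mult norm_power summable_mult summable_geometric)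
  have "convergent_prod (\<lambda>i. 1 - x * p ^ i)"
    by (rule abs_convergent_prod_imp_convergent_prod[OF summable_imp_abs_convergent_prod[OF s]])
  then show ?thesis unfolding qinf_def using assms(2) by (rule prodinf_nonzero)
qed

lemma Eth_nz:
  assumes "norm p < 1" "\<And>u::int. x \<noteq> p powi u"
  shows "Eth p x \<noteq> 0"
proof -
  have "1 - x * p ^ k \<noteq> 0" for k
  proof
    assume h: "1 - x * p ^ k = 0"
    show False
    proof (cases "p = 0")
      case True
      with h have "k = 0" by (cases k) auto
      with h True assms(2)[of 0] show False by simp
    next
      case False
      with h have "x = p powi (- int k)"
        by (simp add: power_int_minus field_simps power_int_of_nat)
      with assms(2) show False by blast
    qed
  qed
  moreover have "1 - (p / x) * p ^ k \<noteq> 0" for k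
  proof
    assume h: "1 - (p / x) * p ^ k = 0"
    then have "x \<noteq> 0" by auto
    with h have "x = p ^ Suc k" by (simp add: field_simps)
    then have "x = p powi (int (Suc k))" by (metis power_int_of_nat)
    with assms(2) show False by blast
  qed
  ultimately show ?thesis unfolding Eth_def using qinf_nz[OF assms(1)] by auto
qed

lemma gen5:
  assumes "generic_params p [q, t, a, b, x]" "(k1, k2, k3, k4, k5) \<noteq> (0,0,0,0,0)"
  shows "q powi k1 * t powi k2 * a powi k3 * b powi k4 * x powi k5 \<noteq> p powi u"
proof -
  let ?L = "[k1,k2,k3,k4,k5]"
  have d: "k1 \<noteq> 0 \<or> k2 \<noteq> 0 \<or> k3 \<noteq> 0 \<or> k4 \<noteq> 0 \<or> k5 \<noteq> 0" using assms(2) by auto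
  have "\<exists>i<length ?L. ?L ! i \<noteq> 0"
    using d
  proof (elim disjE)
    assume "k1 \<noteq> 0" then show ?thesis by (intro exI[of _ 0]) simp
  next
    assume "k2 \<noteq> 0" then show ?thesis by (intro exI[of _ 1]) simp
  next
    assume "k3 \<noteq> 0" then show ?thesis by (intro exI[of _ 2]) simp
  next
    assume "k4 \<noteq> 0" then show ?thesis by (intro exI[of _ 3]) simp
  next
    assume "k5 \<noteq> 0" then show ?thesis by (intro exI[of _ 4]) simp
  qed
  moreover have "length ?L = length [q, t, a, b, x] \<and> (\<exists>i<length ?L. ?L ! i \<noteq> 0) \<longrightarrow>
     (\<Prod>i<length [q, t, a, b, x]. [q, t, a, b, x] ! i powi ?L ! i) \<noteq> p powi u"
    using assms(1) unfolding generic_params_def by (drule_tac spec[of _ ?L], drule_tac spec[of _ u])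
  ultimately have "(\<Prod>i<length [q, t, a, b, x]. [q, t, a, b, x] ! i powi ?L ! i) \<noteq> p powi u"
    by simp
  then show ?thesis by (simp add: eval_nat_numeral mult.assoc mult.left_commute mult.commute)
qed

lemma gen_Eth:
  assumes "norm p < 1" "generic_params p [q, t, a, b, x]" "(k1, k2, k3, k4, k5) \<noteq> (0,0,0,0,0)"
    "c = q powi k1 * t powi k2 * a powi k3 * b powi k4 * x powi k5"
  shows "Eth p c \<noteq> 0"
  using Eth_nz[OF assms(1)] gen5[OF assms(2,3)] assms(4) by blast



definition RR :: "nat \<Rightarrow> nat \<Rightarrow> nat \<Rightarrow> nat list" where
  "RR n m k = replicate k m @ replicate (n - k) 0"

lemma length_RR[simp]: "k \<le> n \<Longrightarrow> length (RR n m k) = n"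
  by (simp add: RR_def)

lemma part_RR: "k \<le> n \<Longrightarrow> part (RR n m k) i = (if 1 \<le> i \<and> i \<le> k then int m else 0)"
  by (auto simp: part_def RR_def nth_append)

lemma part_nonneg: "0 \<le> part l i"
  by (simp add: part_def)

lemma list_eq_part:
  assumes "length u = length v" "\<And>i. 1 \<le> i \<Longrightarrow> i \<le> length u \<Longrightarrow> part u i = part v i"
  shows "u = v"
proof (rule nth_equalityI)
  show "length u = length v" by fact
  fix j assume j: "j < length u"
  have "part u (Suc j) = part v (Suc j)" using assms(2)[of "Suc j"] j by simp
  then show "u ! j = v ! j" using j assms(1) by (simp add: part_def)
qed

lemma part_rep0[simp]: "part (replicate n 0) i = 0"
  by (auto simp: part_def nth_replicate)

lemma epoch_zero[simp]: "epoch p q c 0 = 1"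
  by (simp add: epoch_def)

lemma epoch_nat: "epoch p q c (int N) = (\<Prod>k<N. Eth p (c * q ^ k))"
  by (simp add: epoch_def)

lemma W1_nz_interlace: "W1 p q t a b x lam mu \<noteq> 0 \<Longrightarrow> interlace lam mu"
  by (auto simp: W1_def split: if_splits)

lemma Wm_vanish:
  assumes "zs \<noteq> []" "Wm p q t a b zs nu (replicate n 0) \<noteq> 0" "length zs < i"
  shows "part nu i = 0"
  using assms
proof (induction zs arbitrary: nu i)
  case Nil then show ?case by simp
next
  case (Cons y zs)
  show ?case
  proof (cases zs)
    case Nil
    with Cons.prems have il: "interlace nu (replicate n 0)" by (simp add: W1_nz_interlace)
    show ?thesis
    proof (cases "i \<le> length nu")
      case True
      have i1: "1 \<le> i - 1" "i - 1 \<le> length nu" using True Cons.prems(3) Nil by auto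
      from il have A: "\<And>j. j \<in> {1..length nu} \<Longrightarrow> part nu (j+1) \<le> part (replicate n 0) j"
        unfolding interlace_def by blast
      have "i - 1 + 1 = i" using i1 by simp
      then have "part nu i \<le> part (replicate n 0) (i - 1)" using A[of "i - 1"] i1 by simp
      then show ?thesis using part_nonneg[of nu i] by simp
    next
      case False then show ?thesis by (simp add: part_def)
    qed
  next
    case (Cons z zs')
    let ?S = "{\<nu>. length \<nu> = length nu \<and> interlace nu \<nu>}"
    from Cons.prems(2) Cons have "(\<Sum>\<nu>\<in>?S. W1 p q t (a * t ^ (2 * (length zs' + 1))) (b * t ^ (length zs' + 1))
           (y * t powi (- int (length zs' + 1))) nu \<nu> * Wm p q t a b (z # zs') \<nu> (replicate n 0)) \<noteq> 0"
      by simp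
    then obtain \<nu> where nu: "\<nu> \<in> ?S" and nz: "Wm p q t a b (z # zs') \<nu> (replicate n 0) \<noteq> 0"
      by (metis (no_types, lifting) mult_zero_right sum.neutral)
    have IH: "part \<nu> j = 0" if "length zs < j" for j
      using Cons.IH[of \<nu> j] Cons nz that by simp
    show ?thesis
    proof (cases "i \<le> length nu")
      case True
      have i1: "1 \<le> i - 1" "i - 1 \<le> length nu" using True Cons.prems(3) Cons by auto
      from nu have A: "\<And>j. j \<in> {1..length nu} \<Longrightarrow> part nu (j+1) \<le> part \<nu> j"
        unfolding interlace_def by blast
      have "i - 1 + 1 = i" using i1 by simp
      then have "part nu i \<le> part \<nu> (i - 1)" using A[of "i - 1"] i1 by simp
      moreover have "part \<nu> (i - 1) = 0" using IH Cons.prems(3) by auto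
      ultimately show ?thesis using part_nonneg[of nu i] by simp
    next
      case False then show ?thesis by (simp add: part_def)
    qed
  qed
qed



lemma finite_interlace: "finite {\<nu>. length \<nu> = length lam \<and> interlace lam \<nu>}"
proof (rule finite_subset[OF _ finite_lists_length_eq[OF finite_atMost[of "sum_list lam"], of "length lam"]])
  show "{\<nu>. length \<nu> = length lam \<and> interlace lam \<nu>} \<subseteq> {xs. set xs \<subseteq> {..sum_list lam} \<and> length xs = length lam}"
  proof (rule subsetI)
    fix \<nu> assume "\<nu> \<in> {\<nu>. length \<nu> = length lam \<and> interlace lam \<nu>}"
    then have l: "length \<nu> = length lam" and il: "interlace lam \<nu>" by auto
    have "set \<nu> \<subseteq> {..sum_list lam}"
    proof
      fix x assume x: "x \<in> set \<nu>"
      then obtain j where j: "j < length \<nu>" "\<nu> ! j = x" by (auto simp: in_set_conv_nth)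
      have "part \<nu> (Suc j) \<le> part lam (Suc j)" using il j l unfolding interlace_def by auto
      then have "\<nu> ! j \<le> lam ! j" using j l by (simp add: part_def)
      also have "\<dots> \<le> sum_list lam" using j l by (simp add: elem_le_sum_list)
      finally show "x \<in> {..sum_list lam}" using j by simp
    qed
    then show "\<nu> \<in> {xs. set xs \<subseteq> {..sum_list lam} \<and> length xs = length lam}" using l by simp
  qed
qed

lemma interlace_RR: "1 \<le> k \<Longrightarrow> k \<le> n \<Longrightarrow> interlace (RR n m k) (RR n m (k - 1))"
  by (auto simp: interlace_def part_RR)

lemma collapse:
  assumes "2 \<le> k" "k \<le> n" "length zs = k - 1"
  shows "Wm p q t a b (y # zs) (RR n m k) (replicate n 0) =
    W1 p q t (a * t ^ (2 * (k - 1))) (b * t ^ (k - 1)) (y * t powi (- int (k - 1))) (RR n m k) (RR n m (k - 1))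
    * Wm p q t a b zs (RR n m (k - 1)) (replicate n 0)"
proof -
  obtain z zs' where zs: "zs = z # zs'" using assms by (cases zs) auto
  have lz: "length zs' + 1 = k - 1" using assms zs by simp
  let ?S = "{\<nu>. length \<nu> = length (RR n m k) \<and> interlace (RR n m k) \<nu>}"
  let ?f = "\<lambda>\<nu>. W1 p q t (a * t ^ (2 * (k - 1))) (b * t ^ (k - 1)) (y * t powi (- int (k - 1))) (RR n m k) \<nu>
           * Wm p q t a b zs \<nu> (replicate n 0)"
  have lhs: "Wm p q t a b (y # zs) (RR n m k) (replicate n 0) = sum ?f ?S"
    using zs lz by simp
  have mem: "RR n m (k - 1) \<in> ?S" using assms interlace_RR[of k n m] by simp
  have zero: "?f \<nu> = 0" if "\<nu> \<in> ?S - {RR n m (k - 1)}" for \<nu>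
  proof (rule ccontr)
    assume "?f \<nu> \<noteq> 0"
    then have nz: "Wm p q t a b zs \<nu> (replicate n 0) \<noteq> 0" by auto
    have van: "part \<nu> i = 0" if "k - 1 < i" for i
      using Wm_vanish[OF _ nz, of i] zs that assms by simp
    have il: "interlace (RR n m k) \<nu>" and ln: "length \<nu> = n" using that assms by auto
    have "\<nu> = RR n m (k - 1)"
    proof (rule list_eq_part)
      show "length \<nu> = length (RR n m (k - 1))" using ln assms by simp
      fix i assume i: "1 \<le> i" "i \<le> length \<nu>"
      have b1: "part \<nu> i \<le> part (RR n m k) i" and b2: "part (RR n m k) (i + 1) \<le> part \<nu> i"
        using il i ln assms unfolding interlace_def by auto
      show "part \<nu> i = part (RR n m (k - 1)) i"
      proof (cases "i \<le> k - 1")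
        case True
        then have "Suc i \<le> k" "i \<le> k" using assms(1) by auto
        then show ?thesis using b1 b2 i assms True by (simp add: part_RR)
      next
        case False
        then show ?thesis using van[of i] i assms by (simp add: part_RR)
      qed
    qed
    with that show False by simp
  qed
  have "sum ?f ?S = ?f (RR n m (k - 1))"
    using sum.remove[OF finite_interlace mem, of ?f] sum.neutral[of "?S - {RR n m (k - 1)}" ?f] zero
    by simp
  with lhs show ?thesis by simp
qed



definition QQ :: "complex \<Rightarrow> complex \<Rightarrow> complex \<Rightarrow> nat \<Rightarrow> complex \<Rightarrow> nat \<Rightarrow> complex" where
  "QQ p q t m c k = (\<Prod>i\<in>{1..k}. epoch p q (c * t powi (1 - int i)) (int m))"

lemma Hfun_RR:
  assumes "1 \<le> k" "k \<le> n"
  shows "Hfun p q t b (RR n m k) (RR n m (k - 1)) = 1"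
proof -
  have d: "part (RR n m (k - 1)) (j - 1) - part (RR n m k) j = 0" if "2 \<le> j" for j
    using that assms by (auto simp: part_RR)
  show ?thesis unfolding Hfun_def
    by (rule trans[OF _ mult_1_left[of 1]], rule arg_cong2[where f="(*)"]; rule prod.neutral; rule ballI;
        rule prod.neutral; rule ballI; subst d; auto)
qed

lemma ppoch_RR:
  assumes "k \<le> n"
  shows "ppoch p q t c (RR n m k) = QQ p q t m c k"
proof -
  have "ppoch p q t c (RR n m k) = (\<Prod>i\<in>{1..n}. epoch p q (c * t powi (1 - int i)) (part (RR n m k) i))"
    using assms by (simp add: ppoch_def)
  also have "\<dots> = (\<Prod>i\<in>{1..k}. epoch p q (c * t powi (1 - int i)) (int m))"
    by (rule prod.mono_neutral_cong_right) (use assms in \<open>auto simp: part_RR\<close>)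
  finally show ?thesis by (simp add: QQ_def)
qed

lemma QQ_Suc: "QQ p q t m c (Suc k) = QQ p q t m c k * epoch p q (c * t powi (- int k)) (int m)"
  by (simp add: QQ_def)

lemma QQ_Suc':
  assumes "t \<noteq> 0"
  shows "QQ p q t m c (Suc k) = epoch p q c (int m) * QQ p q t m (c / t) k"
proof -
  have "QQ p q t m c (Suc k) = epoch p q (c * t powi (1 - int 1)) (int m) * (\<Prod>i\<in>{Suc 1..Suc k}. epoch p q (c * t powi (1 - int i)) (int m))"
    unfolding QQ_def by (subst prod.atLeast_Suc_atMost) auto
  also have "(\<Prod>i\<in>{Suc 1..Suc k}. epoch p q (c * t powi (1 - int i)) (int m)) = (\<Prod>i\<in>{1..k}. epoch p q (c * t powi (1 - int (Suc i))) (int m))"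
    by (subst prod.atLeast_Suc_atMost_Suc_shift) (simp add: comp_def)
  also have "\<dots> = QQ p q t m (c / t) k"
    unfolding QQ_def
  proof (rule prod.cong[OF refl])
    fix i
    have "t powi (1 - int (Suc i)) = t powi (1 - int i) / t"
      using assms by (simp add: power_int_diff power_int_minus field_simps)
    then show "epoch p q (c * t powi (1 - int (Suc i))) (int m) = epoch p q (c / t * t powi (1 - int i)) (int m)"
      by simp
  qed
  finally show ?thesis by simp
qed

lemma epoch_nz: "(\<And>j. Eth p (c * q ^ j) \<noteq> 0) \<Longrightarrow> epoch p q c (int N) \<noteq> 0"
  by (simp add: epoch_nat)

lemma QQ_nz: "(\<And>i j. 1 \<le> i \<Longrightarrow> i \<le> k \<Longrightarrow> Eth p (c * t powi (1 - int i) * q ^ j) \<noteq> 0) \<Longrightarrow> QQ p q t m c k \<noteq> 0"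
  unfolding QQ_def by (auto simp: epoch_nat)

lemma Eth_shift:
  assumes "Eth p B \<noteq> 0"
  shows "Eth p (B * q powi int N) * epoch p q B (int N) / Eth p B = epoch p q (q * B) (int N)"
proof -
  have "Eth p (B * q ^ N) * (\<Prod>k<N. Eth p (B * q ^ k)) = (\<Prod>k<Suc N. Eth p (B * q ^ k))"
    by simp
  also have "\<dots> = Eth p B * (\<Prod>k<N. Eth p (q * B * q ^ k))"
    by (subst prod.lessThan_Suc_shift) (simp add: mult_ac)
  finally show ?thesis using assms by (simp add: epoch_nat power_int_of_nat field_simps)
qed



definition FF :: "complex \<Rightarrow> complex \<Rightarrow> complex \<Rightarrow> complex \<Rightarrow> nat \<Rightarrow> int \<Rightarrow> complex" where
  "FF p q t b m s = epoch p q (q * b * t powi s) (2 * int m)"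

definition SS :: "complex \<Rightarrow> complex \<Rightarrow> complex \<Rightarrow> complex \<Rightarrow> nat \<Rightarrow> nat \<Rightarrow> complex" where
  "SS p q t b m k = (\<Prod>i\<in>{1..k - 1}. FF p q t b m (int k - 2 * int i) / FF p q t b m (int k - 1 - 2 * int i))"

lemma tpow: "(t::complex) \<noteq> 0 \<Longrightarrow> t ^ l * t powi z = t powi (int l + z)"
  by (subst power_int_add) (auto simp: power_int_of_nat)

lemma lastprod:
  assumes "Suc l \<le> n" "t \<noteq> 0"
    and nz: "\<And>i. Eth p (b * t ^ l * t powi (1 - 2 * int i)) \<noteq> 0"
  shows "(\<Prod>i\<in>{1..length (RR n m (Suc l))}.
            Eth p ((b * t ^ l) * t powi (1 - 2 * int i) * q powi (2 * part (RR n m l) i)) / Eth p ((b * t ^ l) * t powi (1 - 2 * int i))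
            * epoch p q ((b * t ^ l) * t powi (1 - 2 * int i)) (part (RR n m l) i + part (RR n m (Suc l)) (i + 1))
            / epoch p q ((b * t ^ l) * q * t powi (- 2 * int i)) (part (RR n m l) i + part (RR n m (Suc l)) (i + 1))
            * t powi (int i * (part (RR n m l) i - part (RR n m (Suc l)) (i + 1))))
        = SS p q t b m (Suc l)"
proof -
  let ?B = "\<lambda>i. b * t ^ l * t powi (1 - 2 * int i)"
  have A: "Eth p (?B i * q powi (2 * part (RR n m l) i)) / Eth p (?B i)
            * epoch p q (?B i) (part (RR n m l) i + part (RR n m (Suc l)) (i + 1))
            / epoch p q ((b * t ^ l) * q * t powi (- 2 * int i)) (part (RR n m l) i + part (RR n m (Suc l)) (i + 1))
            * t powi (int i * (part (RR n m l) i - part (RR n m (Suc l)) (i + 1)))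
        = FF p q t b m (int (Suc l) - 2 * int i) / FF p q t b m (int (Suc l) - 1 - 2 * int i)"
    if i: "1 \<le> i" "i \<le> l" for i
  proof -
    have pm: "part (RR n m l) i = int m" "part (RR n m (Suc l)) (i + 1) = int m"
      using i assms(1) by (auto simp: part_RR)
    have e1: "2 * int m = int (2 * m)" "int m + int m = int (2 * m)" by simp_all
    have h3: "Eth p (?B i * q powi int (2 * m)) * epoch p q (?B i) (int (2 * m)) / Eth p (?B i)
          = epoch p q (q * ?B i) (int (2 * m))"
      by (rule Eth_shift[OF nz])
    have h4: "q * ?B i = q * b * t powi (int (Suc l) - 2 * int i)"
    proof -
      have h: "int (Suc l) - 2 * int i = int l + (1 - 2 * int i)" by simp
      show ?thesis by (simp only: h tpow[OF assms(2), symmetric]) (simp add: mult_ac)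
    qed
    have h5: "(b * t ^ l) * q * t powi (- 2 * int i) = q * b * t powi (int (Suc l) - 1 - 2 * int i)"
    proof -
      have h: "int (Suc l) - 1 - 2 * int i = int l + (- 2 * int i)" by simp
      show ?thesis by (simp only: h tpow[OF assms(2), symmetric]) (simp add: mult_ac)
    qed
    have L: "Eth p (?B i * q powi (2 * part (RR n m l) i)) / Eth p (?B i)
            * epoch p q (?B i) (part (RR n m l) i + part (RR n m (Suc l)) (i + 1))
            / epoch p q ((b * t ^ l) * q * t powi (- 2 * int i)) (part (RR n m l) i + part (RR n m (Suc l)) (i + 1))
            * t powi (int i * (part (RR n m l) i - part (RR n m (Suc l)) (i + 1)))
          = (Eth p (?B i * q powi int (2 * m)) * epoch p q (?B i) (int (2 * m)) / Eth p (?B i))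
            / epoch p q ((b * t ^ l) * q * t powi (- 2 * int i)) (int (2 * m))"
      unfolding pm e1 by simp
    show ?thesis by (simp only: L h3) (simp only: h4 h5 FF_def e1)
  qed
  have B: "Eth p (?B i * q powi (2 * part (RR n m l) i)) / Eth p (?B i)
            * epoch p q (?B i) (part (RR n m l) i + part (RR n m (Suc l)) (i + 1))
            / epoch p q ((b * t ^ l) * q * t powi (- 2 * int i)) (part (RR n m l) i + part (RR n m (Suc l)) (i + 1))
            * t powi (int i * (part (RR n m l) i - part (RR n m (Suc l)) (i + 1))) = 1"
    if i: "l < i" "i \<le> n" for i
  proof -
    have pm: "part (RR n m l) i = 0" "part (RR n m (Suc l)) (i + 1) = 0"
      using i assms(1) by (auto simp: part_RR)
    show ?thesis unfolding pm using nz[of i] by simp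
  qed
  have "(\<Prod>i\<in>{1..n}. Eth p (?B i * q powi (2 * part (RR n m l) i)) / Eth p (?B i)
            * epoch p q (?B i) (part (RR n m l) i + part (RR n m (Suc l)) (i + 1))
            / epoch p q ((b * t ^ l) * q * t powi (- 2 * int i)) (part (RR n m l) i + part (RR n m (Suc l)) (i + 1))
            * t powi (int i * (part (RR n m l) i - part (RR n m (Suc l)) (i + 1))))
     = (\<Prod>i\<in>{1..l}. FF p q t b m (int (Suc l) - 2 * int i) / FF p q t b m (int (Suc l) - 1 - 2 * int i))"
    by (rule prod.mono_neutral_cong_right) (use assms(1) A B in auto)
  then show ?thesis using assms(1) by (simp add: SS_def)
qed



definition single :: "complex \<Rightarrow> complex \<Rightarrow> complex \<Rightarrow> complex \<Rightarrow> nat \<Rightarrow> complex \<Rightarrow> complex" where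
  "single p q a b m x = epoch p q (1 / x) (int m) * epoch p q (a * x) (int m)
        / (epoch p q (q * b * x) (int m) * epoch p q (q * b / (a * x)) (int m))"

lemma alg:
  fixes Q1 Q2 Q3 Q4 E1 E2 E3 E4 S :: complex
  assumes "Q1 \<noteq> 0" "Q2 \<noteq> 0" "Q3 \<noteq> 0" "Q4 \<noteq> 0"
  shows "1 * (Q1 * E1 * (Q2 * E2) * Q3 * Q4) / (Q1 * Q2 * (E3 * Q3) * (E4 * Q4)) * S = S * (E1 * E2 / (E3 * E4))"
proof (cases "E3 = 0 \<or> E4 = 0")
  case True then show ?thesis by auto
next
  case False then show ?thesis using assms by (simp add: field_simps)
qed

lemma tsplit: "(t::complex) \<noteq> 0 \<Longrightarrow> t powi (int l + 1 - int i) = t ^ l * t powi (1 - int i)"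
  using tpow[of t l "1 - int i"] by (simp add: algebra_simps)

lemma tsplit1: "(t::complex) \<noteq> 0 \<Longrightarrow> t powi (1 - int i) = t * t powi (- int i)"
  using power_int_add_1'[of t "- int i"] by (simp add: algebra_simps)

lemma step:
  assumes "Suc l \<le> n" "norm p < 1" "q \<noteq> 0" "t \<noteq> 0" "a \<noteq> 0" "b \<noteq> 0" "y \<noteq> 0"
    and gen: "generic_params p [q, t, a, b, y]"
  shows "W1 p q t (a * t ^ (2 * l)) (b * t ^ l) (y * t powi (- int l)) (RR n m (Suc l)) (RR n m l)
       = SS p q t b m (Suc l) * single p q a b m y"
proof -
  define a' where "a' = a * t ^ (2 * l)"
  define b' where "b' = b * t ^ l"
  define x' where "x' = y * t powi (- int l)"
  have t2l: "t ^ (2 * l) = t ^ l * t ^ l" by (simp add: mult_2 power_add)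
  have tl: "t ^ l \<noteq> 0" "t powi (- int l) \<noteq> 0" using assms by auto
  have il: "interlace (RR n m (Suc l)) (RR n m l)" using interlace_RR[of "Suc l" n m] assms by simp
  have H: "Hfun p q t b' (RR n m (Suc l)) (RR n m l) = 1" using Hfun_RR[of "Suc l" n] assms by simp
  have P: "\<And>c k. k \<le> n \<Longrightarrow> ppoch p q t c (RR n m k) = QQ p q t m c k" using ppoch_RR by blast
  have lp: "(\<Prod>i\<in>{1..length (RR n m (Suc l))}.
            Eth p (b' * t powi (1 - 2 * int i) * q powi (2 * part (RR n m l) i)) / Eth p (b' * t powi (1 - 2 * int i))
            * epoch p q (b' * t powi (1 - 2 * int i)) (part (RR n m l) i + part (RR n m (Suc l)) (i + 1))
            / epoch p q (b' * q * t powi (- 2 * int i)) (part (RR n m l) i + part (RR n m (Suc l)) (i + 1))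
            * t powi (int i * (part (RR n m l) i - part (RR n m (Suc l)) (i + 1))))
        = SS p q t b m (Suc l)"
    unfolding b'_def
  proof (rule lastprod[OF assms(1,4)])
    fix i
    show "Eth p (b * t ^ l * t powi (1 - 2 * int i)) \<noteq> 0"
      by (rule gen_Eth[OF assms(2) gen, of 0 "int l + (1 - 2 * int i)" 0 1 0]) (auto simp: tpow[OF assms(4)])
  qed
  have q1: "QQ p q t m (1 / x') l \<noteq> 0"
  proof (rule QQ_nz)
    fix i j assume i: "1 \<le> i" "i \<le> l"
    show "Eth p (1 / x' * t powi (1 - int i) * q ^ j) \<noteq> 0"
    proof (rule gen_Eth[OF assms(2) gen, of "int j" "int l + 1 - int i" 0 0 "-1"])
      show "1 / x' * t powi (1 - int i) * q ^ j = q powi int j * t powi (int l + 1 - int i) * a powi 0 * b powi 0 * y powi - 1"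
        unfolding x'_def tsplit[OF assms(4)] using assms by (simp add: power_int_minus field_simps)
    qed auto
  qed
  have q2: "QQ p q t m (a' * x') l \<noteq> 0"
  proof (rule QQ_nz)
    fix i j assume i: "1 \<le> i" "i \<le> l"
    show "Eth p (a' * x' * t powi (1 - int i) * q ^ j) \<noteq> 0"
    proof (rule gen_Eth[OF assms(2) gen, of "int j" "int l + 1 - int i" 1 0 1])
      show "a' * x' * t powi (1 - int i) * q ^ j = q powi int j * t powi (int l + 1 - int i) * a powi 1 * b powi 0 * y powi 1"
        unfolding a'_def x'_def tsplit[OF assms(4)] t2l using assms by (simp add: power_int_minus field_simps mult_2 power_add)
    qed auto
  qed
  have q3: "QQ p q t m (q * b' * x' / t) l \<noteq> 0"
  proof (rule QQ_nz)
    fix i j assume i: "1 \<le> i" "i \<le> l"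
    show "Eth p (q * b' * x' / t * t powi (1 - int i) * q ^ j) \<noteq> 0"
    proof (rule gen_Eth[OF assms(2) gen, of "int j + 1" "- int i" 0 1 1])
      show "q * b' * x' / t * t powi (1 - int i) * q ^ j = q powi (int j + 1) * t powi (- int i) * a powi 0 * b powi 1 * y powi 1"
        unfolding b'_def x'_def tsplit1[OF assms(4)] using assms by (simp add: power_int_minus power_int_add field_simps)
    qed auto
  qed
  have q4: "QQ p q t m (q * b' / (a' * x' * t)) l \<noteq> 0"
  proof (rule QQ_nz)
    fix i j assume i: "1 \<le> i" "i \<le> l"
    show "Eth p (q * b' / (a' * x' * t) * t powi (1 - int i) * q ^ j) \<noteq> 0"
    proof (rule gen_Eth[OF assms(2) gen, of "int j + 1" "- int i" "-1" 1 "-1"])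
      show "q * b' / (a' * x' * t) * t powi (1 - int i) * q ^ j = q powi (int j + 1) * t powi (- int i) * a powi -1 * b powi 1 * y powi -1"
        unfolding a'_def b'_def x'_def tsplit1[OF assms(4)] t2l using assms by (simp add: power_int_minus power_int_add field_simps mult_2 power_add)
    qed auto
  qed
  have e1: "1 / x' * t powi (- int l) = 1 / y" unfolding x'_def using assms by (simp add: power_int_minus)
  have e2: "a' * x' * t powi (- int l) = a * y" unfolding a'_def x'_def t2l using assms by (simp add: power_int_minus field_simps mult_2 power_add)
  have e3: "q * b' * x' = q * b * y" unfolding b'_def x'_def using assms by (simp add: power_int_minus field_simps)
  have e4: "q * b' / (a' * x') = q * b / (a * y)" unfolding a'_def b'_def x'_def t2l using assms by (simp add: power_int_minus field_simps mult_2 power_add)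
  have d4: "q * b' / (a' * x') / t = q * b' / (a' * x' * t)" by simp
  have "W1 p q t a' b' x' (RR n m (Suc l)) (RR n m l)
      = 1 * (QQ p q t m (1 / x') l * epoch p q (1 / y) (int m) * (QQ p q t m (a' * x') l * epoch p q (a * y) (int m))
             * QQ p q t m (q * b' * x' / t) l * QQ p q t m (q * b' / (a' * x' * t)) l)
        / (QQ p q t m (1 / x') l * QQ p q t m (a' * x') l * (epoch p q (q * b * y) (int m) * QQ p q t m (q * b' * x' / t) l)
           * (epoch p q (q * b / (a * y)) (int m) * QQ p q t m (q * b' / (a' * x' * t)) l))
        * SS p q t b m (Suc l)"
    unfolding W1_def using il assms
    by (simp only: if_True H P lp Suc_leD le_refl,
        simp only: QQ_Suc[where c="1 / x'" and k=l] QQ_Suc[where c="a' * x'" and k=l]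
          QQ_Suc'[OF assms(4), where c="q * b' * x'" and k=l] QQ_Suc'[OF assms(4), where c="q * b' / (a' * x')" and k=l],
        simp only: d4, simp only: e1 e2 e3 e4)
  also have "\<dots> = SS p q t b m (Suc l) * single p q a b m y"
    unfolding single_def by (rule alg[OF q1 q2 q3 q4])
  finally show ?thesis unfolding a'_def b'_def x'_def .
qed



lemma telesc:
  fixes f :: "int \<Rightarrow> complex"
  assumes nz: "\<And>s. f s \<noteq> 0"
  shows "(\<Prod>i\<in>{1..Suc k - 1}. f (int (Suc k) - 2 * int i) / f (int (Suc k) - 1 - 2 * int i))
       * (\<Prod>i\<in>{1..Suc (Suc k) - 1}. f (int (Suc (Suc k)) - 2 * int i) / f (int (Suc (Suc k)) - 1 - 2 * int i))
       = f (int k) / f (- 1 - int k)"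
proof -
  define N1 where "N1 = (\<Prod>i\<in>{1..k}. f (int (Suc k) - 2 * int i))"
  define D1 where "D1 = (\<Prod>i\<in>{1..k}. f (int (Suc k) - 1 - 2 * int i))"
  have N1z: "N1 \<noteq> 0" and D1z: "D1 \<noteq> 0" unfolding N1_def D1_def using nz by auto
  have n2: "(\<Prod>i\<in>{1..Suc k}. f (int (Suc (Suc k)) - 2 * int i)) = f (int k) * D1"
  proof -
    have "(\<Prod>i\<in>{1..Suc k}. f (int (Suc (Suc k)) - 2 * int i))
        = f (int (Suc (Suc k)) - 2 * int 1) * (\<Prod>i\<in>{Suc 1..Suc k}. f (int (Suc (Suc k)) - 2 * int i))"
      by (subst prod.atLeast_Suc_atMost) auto
    also have "(\<Prod>i\<in>{Suc 1..Suc k}. f (int (Suc (Suc k)) - 2 * int i)) = (\<Prod>i\<in>{1..k}. f (int (Suc (Suc k)) - 2 * int (Suc i)))"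
      by (subst prod.atLeast_Suc_atMost_Suc_shift) (simp add: comp_def)
    also have "\<dots> = D1" unfolding D1_def by (rule prod.cong) (auto simp: algebra_simps)
    finally show ?thesis by simp
  qed
  have d2: "(\<Prod>i\<in>{1..Suc k}. f (int (Suc (Suc k)) - 1 - 2 * int i)) = N1 * f (- 1 - int k)"
  proof -
    have "(\<Prod>i\<in>{1..Suc k}. f (int (Suc (Suc k)) - 1 - 2 * int i))
       = (\<Prod>i\<in>{1..k}. f (int (Suc (Suc k)) - 1 - 2 * int i)) * f (int (Suc (Suc k)) - 1 - 2 * int (Suc k))"
      by (simp add: prod.cl_ivl_Suc)
    also have "(\<Prod>i\<in>{1..k}. f (int (Suc (Suc k)) - 1 - 2 * int i)) = N1"
      unfolding N1_def by (rule prod.cong) (auto simp: algebra_simps)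
    also have "f (int (Suc (Suc k)) - 1 - 2 * int (Suc k)) = f (- 1 - int k)" by (simp add: algebra_simps)
    finally show ?thesis .
  qed
  have s1: "(\<Prod>i\<in>{1..Suc k - 1}. f (int (Suc k) - 2 * int i) / f (int (Suc k) - 1 - 2 * int i)) = N1 / D1"
    unfolding N1_def D1_def by (simp add: prod_dividef)
  have s2: "(\<Prod>i\<in>{1..Suc (Suc k) - 1}. f (int (Suc (Suc k)) - 2 * int i) / f (int (Suc (Suc k)) - 1 - 2 * int i))
      = (f (int k) * D1) / (N1 * f (- 1 - int k))"
    by (simp only: diff_Suc_1 prod_dividef n2 d2)
  have "N1 / D1 * ((f (int k) * D1) / (N1 * f (- 1 - int k))) = f (int k) / f (- 1 - int k)"
    using N1z D1z nz by (simp add: field_simps)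
  then show ?thesis by (simp only: s1 s2)
qed

lemma Gshift:
  fixes f :: "int \<Rightarrow> complex"
  shows "(\<Prod>j\<in>{1..Suc (Suc k) div 2}. f (int (Suc (Suc k)) - 2 * int j) / f (- 1 - int (Suc (Suc k)) + 2 * int j))
     = f (int k) / f (- 1 - int k) * (\<Prod>j\<in>{1..k div 2}. f (int k - 2 * int j) / f (- 1 - int k + 2 * int j))"
proof -
  have e: "Suc (Suc k) div 2 = Suc (k div 2)" by simp
  have "(\<Prod>j\<in>{1..Suc (k div 2)}. f (int (Suc (Suc k)) - 2 * int j) / f (- 1 - int (Suc (Suc k)) + 2 * int j))
     = f (int (Suc (Suc k)) - 2 * int 1) / f (- 1 - int (Suc (Suc k)) + 2 * int 1)
       * (\<Prod>j\<in>{Suc 1..Suc (k div 2)}. f (int (Suc (Suc k)) - 2 * int j) / f (- 1 - int (Suc (Suc k)) + 2 * int j))"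
    by (subst prod.atLeast_Suc_atMost) auto
  also have "(\<Prod>j\<in>{Suc 1..Suc (k div 2)}. f (int (Suc (Suc k)) - 2 * int j) / f (- 1 - int (Suc (Suc k)) + 2 * int j))
     = (\<Prod>j\<in>{1..k div 2}. f (int (Suc (Suc k)) - 2 * int (Suc j)) / f (- 1 - int (Suc (Suc k)) + 2 * int (Suc j)))"
    by (subst prod.atLeast_Suc_atMost_Suc_shift) (simp add: comp_def)
  also have "\<dots> = (\<Prod>j\<in>{1..k div 2}. f (int k - 2 * int j) / f (- 1 - int k + 2 * int j))"
    by (rule prod.cong) (auto simp: algebra_simps)
  also have "f (int (Suc (Suc k)) - 2 * int 1) / f (- 1 - int (Suc (Suc k)) + 2 * int 1) = f (int k) / f (- 1 - int k)"
    by (simp add: algebra_simps)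
  finally show ?thesis unfolding e .
qed

lemma Gprod:
  fixes f :: "int \<Rightarrow> complex"
  assumes nz: "\<And>s. f s \<noteq> 0"
  shows "(\<Prod>\<kappa>\<in>{1..n}. \<Prod>i\<in>{1..\<kappa> - 1}. f (int \<kappa> - 2 * int i) / f (int \<kappa> - 1 - 2 * int i))
       = (\<Prod>j\<in>{1..n div 2}. f (int n - 2 * int j) / f (- 1 - int n + 2 * int j))"
proof (induction n rule: less_induct)
  case (less n)
  show ?case
  proof (cases n)
    case 0 then show ?thesis by simp
  next
    case (Suc n1)
    show ?thesis
    proof (cases n1)
      case 0 then show ?thesis using Suc by simp
    next
      case (Suc k)
      have IH: "(\<Prod>\<kappa>\<in>{1..k}. \<Prod>i\<in>{1..\<kappa> - 1}. f (int \<kappa> - 2 * int i) / f (int \<kappa> - 1 - 2 * int i))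
       = (\<Prod>j\<in>{1..k div 2}. f (int k - 2 * int j) / f (- 1 - int k + 2 * int j))"
        using less.IH[of k] \<open>n = Suc n1\<close> Suc by simp
      have "(\<Prod>\<kappa>\<in>{1..Suc (Suc k)}. \<Prod>i\<in>{1..\<kappa> - 1}. f (int \<kappa> - 2 * int i) / f (int \<kappa> - 1 - 2 * int i))
         = (\<Prod>\<kappa>\<in>{1..k}. \<Prod>i\<in>{1..\<kappa> - 1}. f (int \<kappa> - 2 * int i) / f (int \<kappa> - 1 - 2 * int i))
           * ((\<Prod>i\<in>{1..Suc k - 1}. f (int (Suc k) - 2 * int i) / f (int (Suc k) - 1 - 2 * int i))
           * (\<Prod>i\<in>{1..Suc (Suc k) - 1}. f (int (Suc (Suc k)) - 2 * int i) / f (int (Suc (Suc k)) - 1 - 2 * int i)))"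
        by (simp only: prod.cl_ivl_Suc) (simp add: mult.assoc)
      also have "\<dots> = (\<Prod>j\<in>{1..k div 2}. f (int k - 2 * int j) / f (- 1 - int k + 2 * int j)) * (f (int k) / f (- 1 - int k))"
      proof -
        have T: "(\<Prod>i\<in>{1..Suc k - 1}. f (int (Suc k) - 2 * int i) / f (int (Suc k) - 1 - 2 * int i))
           * (\<Prod>i\<in>{1..Suc (Suc k) - 1}. f (int (Suc (Suc k)) - 2 * int i) / f (int (Suc (Suc k)) - 1 - 2 * int i))
           = f (int k) / f (- 1 - int k)" by (rule telesc[OF nz])
        show ?thesis by (simp only: IH T)
      qed
      also have "\<dots> = (\<Prod>j\<in>{1..Suc (Suc k) div 2}. f (int (Suc (Suc k)) - 2 * int j) / f (- 1 - int (Suc (Suc k)) + 2 * int j))"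
        by (subst Gshift) (rule mult.commute)
      finally show ?thesis using \<open>n = Suc n1\<close> Suc by simp
    qed
  qed
qed



lemma mainind:
  assumes "length xs = k" "1 \<le> k" "k \<le> n" "norm p < 1" "q \<noteq> 0" "t \<noteq> 0" "a \<noteq> 0" "b \<noteq> 0"
    and "\<forall>x\<in>set xs. x \<noteq> 0 \<and> generic_params p [q, t, a, b, x]"
  shows "Wm p q t a b xs (RR n m k) (replicate n 0)
       = (\<Prod>\<kappa>\<in>{1..k}. SS p q t b m \<kappa>) * (\<Prod>i<k. single p q a b m (xs ! i))"
  using assms
proof (induction xs arbitrary: k)
  case Nil then show ?case by simp
next
  case (Cons y zs)
  have y: "y \<noteq> 0" "generic_params p [q, t, a, b, y]" using Cons.prems by auto
  show ?case
  proof (cases zs)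
    case Nil
    then have k: "k = 1" using Cons.prems by simp
    have "W1 p q t (a * t ^ (2 * 0)) (b * t ^ 0) (y * t powi (- int 0)) (RR n m (Suc 0)) (RR n m 0)
       = SS p q t b m (Suc 0) * single p q a b m y"
      by (rule step) (use Cons.prems y k in auto)
    moreover have "RR n m 0 = replicate n 0" by (simp add: RR_def)
    ultimately show ?thesis using Nil k by simp
  next
    case (Cons z zs')
    define l where "l = length zs"
    have kl: "k = Suc l" "1 \<le> l" using Cons.prems Cons l_def by auto
    have C: "Wm p q t a b (y # zs) (RR n m k) (replicate n 0) =
      W1 p q t (a * t ^ (2 * (k - 1))) (b * t ^ (k - 1)) (y * t powi (- int (k - 1))) (RR n m k) (RR n m (k - 1))
      * Wm p q t a b zs (RR n m (k - 1)) (replicate n 0)"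
      by (rule collapse) (use Cons.prems kl l_def in auto)
    have S: "W1 p q t (a * t ^ (2 * l)) (b * t ^ l) (y * t powi (- int l)) (RR n m (Suc l)) (RR n m l)
       = SS p q t b m (Suc l) * single p q a b m y"
      by (rule step) (use Cons.prems y kl in auto)
    have I: "Wm p q t a b zs (RR n m l) (replicate n 0)
       = (\<Prod>\<kappa>\<in>{1..l}. SS p q t b m \<kappa>) * (\<Prod>i<l. single p q a b m (zs ! i))"
      by (rule Cons.IH) (use Cons.prems kl l_def in auto)
    have "Wm p q t a b (y # zs) (RR n m k) (replicate n 0)
       = SS p q t b m (Suc l) * single p q a b m y * ((\<Prod>\<kappa>\<in>{1..l}. SS p q t b m \<kappa>) * (\<Prod>i<l. single p q a b m (zs ! i)))"
      using C S I kl by simp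
    also have "\<dots> = (\<Prod>\<kappa>\<in>{1..Suc l}. SS p q t b m \<kappa>) * (\<Prod>i<Suc l. single p q a b m ((y # zs) ! i))"
    proof -
      have "(\<Prod>i<Suc l. single p q a b m ((y # zs) ! i)) = single p q a b m y * (\<Prod>i<l. single p q a b m (zs ! i))"
        by (subst prod.lessThan_Suc_shift) simp
      moreover have "(\<Prod>\<kappa>\<in>{1..Suc l}. SS p q t b m \<kappa>) = (\<Prod>\<kappa>\<in>{1..l}. SS p q t b m \<kappa>) * SS p q t b m (Suc l)"
        by (simp add: prod.cl_ivl_Suc)
      ultimately show ?thesis by (simp only: mult_ac)
    qed
    finally show ?thesis using kl by simp
  qed
qed

theorem mainTheorem7:
  fixes n m :: nat and xs :: "complex list" and p q t a b :: complex
  assumes "n \<ge> 1" and "length xs = n" and "norm p < 1"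
    and "q \<noteq> 0" "t \<noteq> 0" "a \<noteq> 0" "b \<noteq> 0" "\<forall>r<n. xs ! r \<noteq> 0"
    and "\<forall>r<n. generic_params p [q, t, a, b, xs ! r]"
  shows "Wm p q t a b xs (replicate n m) (replicate n 0) =
    (\<Prod>j\<in>{1..n div 2}.
        epoch p q (q * b * t powi (int n - 2 * int j)) (2 * int m)
        / epoch p q (q * b * t powi (-1 - int n + 2 * int j)) (2 * int m))
    * (\<Prod>i<n. epoch p q (1 / xs ! i) (int m) * epoch p q (a * xs ! i) (int m)
        / (epoch p q (q * b * xs ! i) (int m) * epoch p q (q * b / (a * xs ! i)) (int m)))"
  proof -
  have gens: "\<forall>x\<in>set xs. x \<noteq> 0 \<and> generic_params p [q, t, a, b, x]"
    using assms(2,8,9) by (auto simp: in_set_conv_nth)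
  have M: "Wm p q t a b xs (RR n m n) (replicate n 0)
       = (\<Prod>\<kappa>\<in>{1..n}. SS p q t b m \<kappa>) * (\<Prod>i<n. single p q a b m (xs ! i))"
    by (rule mainind) (use assms gens in auto)
  have R: "RR n m n = replicate n m" by (simp add: RR_def)
  have g0: "generic_params p [q, t, a, b, xs ! 0]" using assms(1,9) by auto
  have FFnz: "FF p q t b m s \<noteq> 0" for s
  proof -
    have "Eth p (q * b * t powi s * q ^ j) \<noteq> 0" for j
    proof (rule gen_Eth[OF assms(3) g0, of "int j + 1" s 0 1 0])
      show "q * b * t powi s * q ^ j = q powi (int j + 1) * t powi s * a powi 0 * b powi 1 * (xs ! 0) powi 0"
        using assms(4) by (simp add: power_int_add mult_ac)
    qed auto
    then show ?thesis unfolding FF_def using epoch_nz[of p "q * b * t powi s" q "2 * m"] by simp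
  qed
  have G: "(\<Prod>\<kappa>\<in>{1..n}. SS p q t b m \<kappa>)
     = (\<Prod>j\<in>{1..n div 2}. FF p q t b m (int n - 2 * int j) / FF p q t b m (- 1 - int n + 2 * int j))"
    unfolding SS_def by (rule Gprod[OF FFnz])
  show ?thesis using M unfolding R G FF_def single_def by simp
qed

end
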